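(* Let $h_{11},h_{20},h_{31},h_{40}\in\mathbb{R}$ and consider the planar Hamiltonian system $$\dot x=\frac{\partial \bar H_2}{\partial y}(x,y),\qquad \dot y=-\frac{\partial \bar H_2}{\partial x}(x,y),$$ where $$\bar H_2(x,y)=\tfrac12 y^2+(8h_{11}h_{20}+4h_{31})x^3+(4h_{20}-2h_{11}^2)x^2y+\tfrac12 y^3+\big[2h_{11}^2(h_{11}^2+4h_{20})+8(h_{11}h_{31}-h_{40})\big]x^4+(8h_{11}h_{20}+4h_{31})x^3y+(2h_{20}-h_{11}^2)x^2y^2+\tfrac18 y^4 .$$ Consider the conditions (A) $h_{31}\neq -2h_{11}h_{20}$; (B) $h_{31}=-2h_{11}h_{20}$ and $h_{20}^2+h_{40}>0$; (C) $h_{31}=-2h_{11}h_{20}$ and $h_{20}^2+h_{40}<0$. Then the origin is an isolated nilpotent singular point of this system if and only if one of (A), (B), (C) holds. Moreover, the origin is (i) a cusp of order 1 if and only if (A) holds; (ii) a nilpotent saddle of order 1 if and only if (B) holds; (iii) a nilpotent center of order 1 if and only if (C) holds.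
   Context: Let $H(x,y)=\frac{\omega}{2}y^2+\sum_{i+j\ge 3}h_{ij}x^iy^j$ with $\omega>0$ be analytic near the origin (so the origin is a nilpotent critical point of $\dot x=H_y,\ \dot y=-H_x$). By the implicit function theorem there is a unique analytic function $\varphi(x)=O(x^2)$ with $H_y(x,\varphi(x))=0$ for $|x|$ small. Write $H_0^*(x)=H(x,\varphi(x))=\sum_{j\ge k}h_jx^j$ with $h_k\neq 0$, $k\ge 2$ (when $H_0^*\not\equiv 0$). The origin is called a cusp of order $m$ if $k=2m+1$; a nilpotent center of order $m$ if $k=2m+2$ and $h_k>0$; a nilpotent saddle of order $m$ if $k=2m+2$ and $h_k<0$. *)

theory Defs
  imports "HOL-Analysis.Analysis"
begin

definition Hbar2 :: "real \<Rightarrow> real \<Rightarrow> real \<Rightarrow> real \<Rightarrow> real \<Rightarrow> real \<Rightarrow> real" where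
  "Hbar2 h11 h20 h31 h40 x y =
     1/2 * y^2 + (8*h11*h20 + 4*h31) * x^3 + (4*h20 - 2*h11^2) * x^2 * y + 1/2 * y^3
     + (2*h11^2*(h11^2 + 4*h20) + 8*(h11*h31 - h40)) * x^4
     + (8*h11*h20 + 4*h31) * x^3 * y + (2*h20 - h11^2) * x^2 * y^2 + 1/8 * y^4"

definition pdx :: "(real \<Rightarrow> real \<Rightarrow> real) \<Rightarrow> real \<Rightarrow> real \<Rightarrow> real" where
  "pdx H x y = deriv (\<lambda>t. H t y) x"
definition pdy :: "(real \<Rightarrow> real \<Rightarrow> real) \<Rightarrow> real \<Rightarrow> real \<Rightarrow> real" where
  "pdy H x y = deriv (\<lambda>t. H x t) y"

definition ham_field :: "(real \<Rightarrow> real \<Rightarrow> real) \<Rightarrow> real \<Rightarrow> real \<Rightarrow> real \<times> real" where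
  "ham_field H x y = (pdy H x y, - pdx H x y)"

definition singular_point :: "(real \<Rightarrow> real \<Rightarrow> real) \<Rightarrow> real \<Rightarrow> real \<Rightarrow> bool" where
  "singular_point H x y \<longleftrightarrow> ham_field H x y = (0, 0)"

definition isolated_singular_point :: "(real \<Rightarrow> real \<Rightarrow> real) \<Rightarrow> real \<Rightarrow> real \<Rightarrow> bool" where
  "isolated_singular_point H x y \<longleftrightarrow> singular_point H x y \<and>
     (\<exists>e>0. \<forall>u v. (u, v) \<noteq> (x, y) \<and> dist (u, v) (x, y) < e \<longrightarrow> \<not> singular_point H u v)"

definition ham_jacobian :: "(real \<Rightarrow> real \<Rightarrow> real) \<Rightarrow> real \<Rightarrow> real \<Rightarrow> real^2^2" where
  "ham_jacobian H x y =
     vector [vector [pdx (pdy H) x y, pdy (pdy H) x y],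
             vector [- pdx (pdx H) x y, - pdy (pdx H) x y]]"

definition mat_pow :: "real^2^2 \<Rightarrow> nat \<Rightarrow> real^2^2" where
  "mat_pow M n = ((\<lambda>A. A ** M) ^^ n) (mat 1)"

definition nilpotent_matrix :: "real^2^2 \<Rightarrow> bool" where
  "nilpotent_matrix M \<longleftrightarrow> (\<exists>n. mat_pow M n = 0)"

definition nilpotent_singular_point :: "(real \<Rightarrow> real \<Rightarrow> real) \<Rightarrow> real \<Rightarrow> real \<Rightarrow> bool" where
  "nilpotent_singular_point H x y \<longleftrightarrow> singular_point H x y \<and>
     nilpotent_matrix (ham_jacobian H x y) \<and> ham_jacobian H x y \<noteq> 0"

definition isolated_nilpotent_singular_point :: "(real \<Rightarrow> real \<Rightarrow> real) \<Rightarrow> real \<Rightarrow> real \<Rightarrow> bool" where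
  "isolated_nilpotent_singular_point H x y \<longleftrightarrow>
     isolated_singular_point H x y \<and> nilpotent_singular_point H x y"

text \<open>H_0^*(x) = H(x, phi(x)) where phi is the (unique, by the implicit function theorem)
  continuous solution of H_y(x, phi x) = 0 near 0 with phi 0 = 0.
  H0star_leading H k a means: the lowest-order nonzero Taylor coefficient of H_0^* at 0
  is h_k = a (with a \<noteq> 0).\<close>
definition H0star_leading :: "(real \<Rightarrow> real \<Rightarrow> real) \<Rightarrow> nat \<Rightarrow> real \<Rightarrow> bool" where
  "H0star_leading H k a \<longleftrightarrow>
     (\<exists>\<delta>>0. \<exists>\<phi>. \<phi> 0 = 0 \<and> continuous_on {-\<delta><..<\<delta>} \<phi> \<and>
        (\<forall>x\<in>{-\<delta><..<\<delta>}. pdy H x (\<phi> x) = 0) \<and>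
        (\<forall>j<k. (deriv ^^ j) (\<lambda>x. H x (\<phi> x)) 0 = 0) \<and>
        (deriv ^^ k) (\<lambda>x. H x (\<phi> x)) 0 / fact k = a) \<and> a \<noteq> 0"

definition cusp_of_order :: "(real \<Rightarrow> real \<Rightarrow> real) \<Rightarrow> nat \<Rightarrow> bool" where
  "cusp_of_order H m \<longleftrightarrow> (\<exists>a. H0star_leading H (2*m+1) a)"

definition nilpotent_center_of_order :: "(real \<Rightarrow> real \<Rightarrow> real) \<Rightarrow> nat \<Rightarrow> bool" where
  "nilpotent_center_of_order H m \<longleftrightarrow> (\<exists>a>0. H0star_leading H (2*m+2) a)"

definition nilpotent_saddle_of_order :: "(real \<Rightarrow> real \<Rightarrow> real) \<Rightarrow> nat \<Rightarrow> bool" where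
  "nilpotent_saddle_of_order H m \<longleftrightarrow> (\<exists>a<0. H0star_leading H (2*m+2) a)"

end

theory Submission
  imports Defs
begin

definition Gf :: "real \<Rightarrow> real \<Rightarrow> real \<Rightarrow> real" where
  "Gf b x y = y + b*x^2 + y^2/2"
definition K :: "real \<Rightarrow> real \<Rightarrow> real \<Rightarrow> real \<Rightarrow> real \<Rightarrow> real" where
  "K a b e x y = 1/2 * (Gf b x y)^2 + a*x^3*(1+y) + e*x^4"
definition Fy :: "real \<Rightarrow> real \<Rightarrow> real \<Rightarrow> real \<Rightarrow> real" where
  "Fy a b x y = Gf b x y * (1+y) + a*x^3"
definition Fx :: "real \<Rightarrow> real \<Rightarrow> real \<Rightarrow> real \<Rightarrow> real \<Rightarrow> real" where
  "Fx a b e x y = Gf b x y * (2*b*x) + 3*a*x^2*(1+y) + 4*e*x^3"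
definition Fyy :: "real \<Rightarrow> real \<Rightarrow> real \<Rightarrow> real" where
  "Fyy b x y = (1+y)^2 + Gf b x y"
definition Fxy :: "real \<Rightarrow> real \<Rightarrow> real \<Rightarrow> real \<Rightarrow> real" where
  "Fxy a b x y = 2*b*x*(1+y) + 3*a*x^2"
definition Fxx :: "real \<Rightarrow> real \<Rightarrow> real \<Rightarrow> real \<Rightarrow> real \<Rightarrow> real" where
  "Fxx a b e x y = 4*b^2*x^2 + 2*b*Gf b x y + 6*a*x*(1+y) + 12*e*x^2"

lemma Hbar2_K: "Hbar2 h11 h20 h31 h40 = K (8*h11*h20+4*h31) (4*h20-2*h11^2) (2*h11*(8*h11*h20+4*h31) - 8*(h20^2+h40))"
  by (intro ext) (simp add: Hbar2_def K_def Gf_def algebra_simps power2_eq_square power3_eq_cube power4_eq_xxxx)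

lemma pdy_K: "pdy (K a b e) = Fy a b"
proof (intro ext)
  fix x y :: real
  have "((\<lambda>t. K a b e x t) has_real_derivative Fy a b x y) (at y)"
    unfolding K_def Fy_def Gf_def
    by (auto intro!: derivative_eq_intros simp: field_simps power2_eq_square)
  then show "pdy (K a b e) x y = Fy a b x y" by (simp add: pdy_def DERIV_imp_deriv)
qed

lemma pdx_K: "pdx (K a b e) = Fx a b e"
proof (intro ext)
  fix x y :: real
  have "((\<lambda>t. K a b e t y) has_real_derivative Fx a b e x y) (at x)"
    unfolding K_def Fx_def Gf_def
    by (auto intro!: derivative_eq_intros simp: field_simps power2_eq_square power3_eq_cube)
  then show "pdx (K a b e) x y = Fx a b e x y" by (simp add: pdx_def DERIV_imp_deriv)
qed



lemma pdx_Fy: "pdx (Fy a b) = Fxy a b"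
proof (intro ext)
  fix x y :: real
  have "((\<lambda>t. Fy a b t y) has_real_derivative Fxy a b x y) (at x)"
    unfolding Fy_def Fxy_def Gf_def
    by (auto intro!: derivative_eq_intros simp: field_simps power2_eq_square)
  then show "pdx (Fy a b) x y = Fxy a b x y" by (simp add: pdx_def DERIV_imp_deriv)
qed

lemma pdy_Fy: "pdy (Fy a b) = Fyy b"
proof (intro ext)
  fix x y :: real
  have "((\<lambda>t. Fy a b x t) has_real_derivative Fyy b x y) (at y)"
    unfolding Fy_def Fyy_def Gf_def
    by (auto intro!: derivative_eq_intros simp: field_simps power2_eq_square)
  then show "pdy (Fy a b) x y = Fyy b x y" by (simp add: pdy_def DERIV_imp_deriv)
qed

lemma pdx_Fx: "pdx (Fx a b e) = Fxx a b e"
proof (intro ext)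
  fix x y :: real
  have "((\<lambda>t. Fx a b e t y) has_real_derivative Fxx a b e x y) (at x)"
    unfolding Fx_def Fxx_def Gf_def
    by (auto intro!: derivative_eq_intros simp: field_simps power2_eq_square)
  then show "pdx (Fx a b e) x y = Fxx a b e x y" by (simp add: pdx_def DERIV_imp_deriv)
qed

lemma pdy_Fx: "pdy (Fx a b e) = Fxy a b"
proof (intro ext)
  fix x y :: real
  have "((\<lambda>t. Fx a b e x t) has_real_derivative Fxy a b x y) (at y)"
    unfolding Fx_def Fxy_def Gf_def
    by (auto intro!: derivative_eq_intros simp: field_simps power2_eq_square)
  then show "pdy (Fx a b e) x y = Fxy a b x y" by (simp add: pdy_def DERIV_imp_deriv)
qed

lemma jac_K: "ham_jacobian (K a b e) 0 0 = vector [vector [0, 1], vector [0, 0]]"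
  by (simp add: ham_jacobian_def pdy_K pdx_K pdx_Fy pdy_Fy pdx_Fx pdy_Fx Fxy_def Fyy_def Fxx_def Gf_def)

lemma nilp_K: "nilpotent_singular_point (K a b e) 0 0"
proof -
  define M :: "real^2^2" where "M = vector [vector [0, 1], vector [0, 0]]"
  have MM: "M ** M = 0"
    by (simp add: M_def vec_eq_iff forall_2 matrix_matrix_mult_def sum_2)
  have "mat_pow M 2 = 0"
    by (simp add: mat_pow_def numeral_2_eq_2 MM)
  moreover have "M \<noteq> 0"
  proof
    assume "M = 0"
    then have "M $ 1 $ 2 = 0" by simp
    then show False by (simp add: M_def)
  qed
  ultimately show ?thesis
    unfolding nilpotent_singular_point_def nilpotent_matrix_def jac_K M_def[symmetric]
    by (auto simp: singular_point_def ham_field_def pdy_K pdx_K Fy_def Fx_def Gf_def)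
qed

lemma sing_K: "singular_point (K a b e) u v \<longleftrightarrow> Fy a b u v = 0 \<and> Fx a b e u v = 0"
  by (simp add: singular_point_def ham_field_def pdy_K pdx_K)



lemma key_id: "(1+v) * Fx a b e u v - 2*b*u * Fy a b u v = u^2 * (3*a*(1+v)^2 + 4*e*u*(1+v) - 2*a*b*u^2)"
  by (simp add: Fx_def Fy_def Gf_def algebra_simps power2_eq_square power3_eq_cube)

lemma Fy_0: "Fy a b 0 v = v * (1 + v/2) * (1+v)"
  by (simp add: Fy_def Gf_def algebra_simps power2_eq_square)

lemma u0_case: assumes "\<bar>v\<bar> < 1" "Fy a b 0 v = 0" shows "v = 0"
proof -
  have "v * (1 + v/2) * (1+v) = 0" using assms(2) Fy_0 by simp
  moreover have "1 + v/2 \<noteq> 0" "1 + v \<noteq> 0" using assms(1) by auto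
  ultimately show ?thesis by simp
qed

lemma Q_bound:
  fixes a b e u v \<epsilon> :: real
  assumes a: "a \<noteq> 0" and u: "\<bar>u\<bar> < \<epsilon>" and v: "\<bar>v\<bar> < \<epsilon>" and eps: "\<epsilon> \<le> 1/2"
    "\<epsilon> \<le> \<bar>a\<bar> / (16*(\<bar>e\<bar>+\<bar>a\<bar>*\<bar>b\<bar>)+1)"
  shows "3*a*(1+v)^2 + 4*e*u*(1+v) - 2*a*b*u^2 \<noteq> 0"
proof -
  have e0: "0 < \<epsilon>" using u abs_ge_zero[of u] by linarith
  have "1/2 \<le> 1+v" using v eps by linarith
  then have "(1/2)^2 \<le> (1+v)^2" by (intro power_mono) auto
  then have w1: "(1+v)^2 \<ge> 1/4" by (simp add: power2_eq_square)
  have w2: "\<bar>1+v\<bar> \<le> 3/2" using v eps by linarith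
  have "0 \<le> \<bar>a\<bar>*\<bar>b\<bar>" by simp
  then have "0 \<le> 16*(\<bar>e\<bar>+\<bar>a\<bar>*\<bar>b\<bar>)" by simp
  then have D: "16*(\<bar>e\<bar>+\<bar>a\<bar>*\<bar>b\<bar>)+1 > 0" by linarith
  have epsD: "\<epsilon> * (16*(\<bar>e\<bar>+\<bar>a\<bar>*\<bar>b\<bar>)+1) \<le> \<bar>a\<bar>"
    using eps(2) D by (simp add: le_divide_eq)
  have t1: "\<bar>3*a*(1+v)^2\<bar> \<ge> 3*\<bar>a\<bar>/4"
  proof -
    have "3*\<bar>a\<bar>*(1/4) \<le> 3*\<bar>a\<bar>*(1+v)^2" using w1 by (intro mult_left_mono) auto
    then show ?thesis by (simp add: abs_mult)
  qed
  have t2: "\<bar>4*e*u*(1+v)\<bar> \<le> 6*\<bar>e\<bar>*\<epsilon>"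
  proof -
    have "\<bar>4*e*u*(1+v)\<bar> = 4*\<bar>e\<bar>*(\<bar>u\<bar>*\<bar>1+v\<bar>)" by (simp add: abs_mult)
    also have "\<bar>u\<bar>*\<bar>1+v\<bar> \<le> \<epsilon> * (3/2)" using u w2 by (intro mult_mono) auto
    then have "4*\<bar>e\<bar>*(\<bar>u\<bar>*\<bar>1+v\<bar>) \<le> 4*\<bar>e\<bar>*(\<epsilon>*(3/2))" by (intro mult_left_mono) auto
    finally show ?thesis by (simp add: mult_ac)
  qed
  have t3: "\<bar>2*a*b*u^2\<bar> \<le> 2*\<bar>a\<bar>*\<bar>b\<bar>*\<epsilon>"
  proof -
    have "\<bar>u\<bar>*\<bar>u\<bar> \<le> \<epsilon> * 1" using u eps by (intro mult_mono) auto
    then have "u^2 \<le> \<epsilon>" by (simp add: power2_eq_square abs_mult[symmetric])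
    then have "\<bar>a\<bar>*\<bar>b\<bar>*u^2 \<le> \<bar>a\<bar>*\<bar>b\<bar>*\<epsilon>" by (intro mult_left_mono) auto
    then show ?thesis by (simp add: abs_mult)
  qed
  have "6*\<bar>e\<bar>*\<epsilon> + 2*\<bar>a\<bar>*\<bar>b\<bar>*\<epsilon> \<le> (3/8) * (\<epsilon> * (16*(\<bar>e\<bar>+\<bar>a\<bar>*\<bar>b\<bar>)+1))"
  proof -
    have "(3/8)*(\<epsilon> * (16*(\<bar>e\<bar>+\<bar>a\<bar>*\<bar>b\<bar>)+1)) = 6*\<bar>e\<bar>*\<epsilon> + 6*(\<bar>a\<bar>*\<bar>b\<bar>*\<epsilon>) + 3/8*\<epsilon>"
      by (simp add: algebra_simps)
    moreover have "0 \<le> \<bar>a\<bar>*\<bar>b\<bar>*\<epsilon>" using e0 by simp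
    moreover have "2*\<bar>a\<bar>*\<bar>b\<bar>*\<epsilon> = 2*(\<bar>a\<bar>*\<bar>b\<bar>*\<epsilon>)" by simp
    ultimately show ?thesis using e0 by linarith
  qed
  also have "\<dots> \<le> (3/8)*\<bar>a\<bar>" using epsD by simp
  finally have "6*\<bar>e\<bar>*\<epsilon> + 2*\<bar>a\<bar>*\<bar>b\<bar>*\<epsilon> \<le> (3/8)*\<bar>a\<bar>" .
  then show ?thesis using t1 t2 t3 a by linarith
qed

lemma iso_core:
  assumes "a \<noteq> 0 \<or> e \<noteq> 0"
  shows "\<exists>\<epsilon>>0. \<forall>u v. \<bar>u\<bar> < \<epsilon> \<and> \<bar>v\<bar> < \<epsilon> \<and> Fy a b u v = 0 \<and> Fx a b e u v = 0 \<longrightarrow> u = 0 \<and> v = 0"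
proof -
  define \<epsilon> where "\<epsilon> = min (1/2) (if a = 0 then 1 else \<bar>a\<bar> / (16*(\<bar>e\<bar>+\<bar>a\<bar>*\<bar>b\<bar>)+1))"
  have "0 \<le> \<bar>a\<bar>*\<bar>b\<bar>" by simp
  then have "0 \<le> 16*(\<bar>e\<bar>+\<bar>a\<bar>*\<bar>b\<bar>)" by simp
  then have D: "16*(\<bar>e\<bar>+\<bar>a\<bar>*\<bar>b\<bar>)+1 > 0" by linarith
  have "\<epsilon> > 0" unfolding \<epsilon>_def using D by auto
  moreover have "u = 0 \<and> v = 0" if h: "\<bar>u\<bar> < \<epsilon>" "\<bar>v\<bar> < \<epsilon>" "Fy a b u v = 0" "Fx a b e u v = 0" for u v
  proof (cases "u = 0")
    case True
    then show ?thesis using u0_case[of v a b] h unfolding \<epsilon>_def by auto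
  next
    case False
    have Q: "u^2 * (3*a*(1+v)^2 + 4*e*u*(1+v) - 2*a*b*u^2) = 0"
      using key_id[of v a b e u] h by simp
    then have Q0: "3*a*(1+v)^2 + 4*e*u*(1+v) - 2*a*b*u^2 = 0" using False by simp
    show ?thesis
    proof (cases "a = 0")
      case True
      then have "e \<noteq> 0" using assms by simp
      moreover have "1 + v \<noteq> 0" using h(2) unfolding \<epsilon>_def by auto
      ultimately show ?thesis using Q0 True False by simp
    next
      case False
      have "3*a*(1+v)^2 + 4*e*u*(1+v) - 2*a*b*u^2 \<noteq> 0"
      proof (rule Q_bound[OF False h(1) h(2)])
        show "\<epsilon> \<le> 1/2" unfolding \<epsilon>_def by (rule min.cobounded1)
        have "\<epsilon> \<le> (if a = 0 then 1 else \<bar>a\<bar> / (16*(\<bar>e\<bar>+\<bar>a\<bar>*\<bar>b\<bar>)+1))"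
          unfolding \<epsilon>_def by (rule min.cobounded2)
        then show "\<epsilon> \<le> \<bar>a\<bar> / (16*(\<bar>e\<bar>+\<bar>a\<bar>*\<bar>b\<bar>)+1)" using False by simp
      qed
      then show ?thesis using Q0 by simp
    qed
  qed
  ultimately show ?thesis by blast
qed

lemma abs_le_dist: "\<bar>u\<bar> \<le> dist (u, v) (0::real, 0::real)" "\<bar>v\<bar> \<le> dist (u, v) (0::real, 0::real)"
  unfolding dist_Pair_Pair dist_real_def by (simp_all add: real_sqrt_ge_abs1 real_sqrt_ge_abs2)

lemma iso_if: assumes "a \<noteq> 0 \<or> e \<noteq> 0" shows "isolated_singular_point (K a b e) 0 0"
proof -
  obtain \<epsilon> where e: "\<epsilon> > 0" and H: "\<forall>u v. \<bar>u\<bar> < \<epsilon> \<and> \<bar>v\<bar> < \<epsilon> \<and> Fy a b u v = 0 \<and> Fx a b e u v = 0 \<longrightarrow> u = 0 \<and> v = 0"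
    using iso_core[OF assms] by blast
  show ?thesis unfolding isolated_singular_point_def
  proof (intro conjI exI[of _ \<epsilon>] allI impI)
    show "singular_point (K a b e) 0 0" by (simp add: sing_K Fy_def Fx_def Gf_def)
    show "\<epsilon> > 0" by fact
    fix u v :: real assume uv: "(u, v) \<noteq> (0, 0) \<and> dist (u, v) (0, 0) < \<epsilon>"
    have d1: "\<bar>u\<bar> \<le> dist (u, v) (0, 0)" "\<bar>v\<bar> \<le> dist (u, v) (0, 0)" by (rule abs_le_dist)+
    have "\<bar>u\<bar> < \<epsilon>" "\<bar>v\<bar> < \<epsilon>" using d1 uv by linarith+
    then show "\<not> singular_point (K a b e) u v"
      using H uv unfolding sing_K by blast
  qed
qed



lemma not_iso: "\<not> isolated_singular_point (K 0 b 0) 0 0"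
proof
  assume "isolated_singular_point (K 0 b 0) 0 0"
  then obtain \<epsilon> where e: "\<epsilon> > 0" and H: "\<And>u v. (u, v) \<noteq> (0, 0) \<and> dist (u, v) (0, 0) < \<epsilon> \<Longrightarrow> \<not> singular_point (K 0 b 0) u v"
    unfolding isolated_singular_point_def by blast
  define x where "x = min (\<epsilon>/4) (1/(4*\<bar>b\<bar>+4))"
  have x0: "x > 0" using e by (simp add: x_def add_pos_nonneg)
  have xe: "x \<le> \<epsilon>/4" by (simp add: x_def)
  have xb: "x * (4*\<bar>b\<bar>+4) \<le> 1"
  proof -
    have "x \<le> 1/(4*\<bar>b\<bar>+4)" by (simp add: x_def)
    moreover have "4*\<bar>b\<bar>+4 > 0" by (simp add: add_nonneg_pos)
    ultimately show ?thesis by (simp add: le_divide_eq mult.commute)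
  qed
  define s where "s = 2*b*x^2"
  have bx: "2*\<bar>b\<bar>*x \<le> 1/2" using xb x0 by (simp add: algebra_simps)
  have as: "\<bar>s\<bar> \<le> x/2"
  proof -
    have "\<bar>s\<bar> = (2*\<bar>b\<bar>*x) * x" by (simp add: s_def abs_mult power2_eq_square)
    also have "\<dots> \<le> (1/2) * x" using bx x0 by (intro mult_right_mono) auto
    finally show ?thesis by simp
  qed
  have "x*(4*\<bar>b\<bar>+4) = x*(4*\<bar>b\<bar>) + 4*x" by (simp add: algebra_simps)
  moreover have "0 \<le> x*(4*\<bar>b\<bar>)" using x0 by simp
  ultimately have x1: "x \<le> 1/4" using xb by linarith
  have s1: "\<bar>s\<bar> \<le> 1" using as x1 by linarith
  define y where "y = sqrt (1 - s) - 1"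
  have sq0: "sqrt (1-s) \<ge> 0" using s1 by simp
  have sq: "sqrt (1-s) ^ 2 = 1 - s" using s1 by simp
  have G: "Gf b x y = 0"
  proof -
    have "Gf b x y = ((1+y)^2 - 1)/2 + b*x^2" by (simp add: Gf_def algebra_simps power2_eq_square)
    also have "(1+y)^2 = 1 - s" using sq by (simp add: y_def)
    finally show ?thesis by (simp add: s_def)
  qed
  have ay: "\<bar>y\<bar> \<le> \<bar>s\<bar>"
  proof -
    have "y * (sqrt (1-s) + 1) = -s" using sq by (simp add: y_def algebra_simps power2_eq_square)
    then have "\<bar>y\<bar> * \<bar>sqrt (1-s) + 1\<bar> = \<bar>s\<bar>" by (metis abs_minus_cancel abs_mult)
    moreover have "\<bar>sqrt (1-s) + 1\<bar> = sqrt (1-s) + 1" by (rule abs_of_nonneg) (use sq0 in simp)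
    moreover have "\<bar>y\<bar> * 1 \<le> \<bar>y\<bar> * (sqrt (1-s) + 1)" using sq0 by (intro mult_left_mono) auto
    ultimately show ?thesis by simp
  qed
  have "dist (x, y) (0, 0) = sqrt (x^2 + y^2)" by (simp add: dist_Pair_Pair)
  also have "\<dots> \<le> \<bar>x\<bar> + \<bar>y\<bar>" by (rule sqrt_sum_squares_le_sum_abs)
  also have "\<dots> < \<epsilon>" using x0 xe ay as e by simp
  finally have "dist (x, y) (0, 0) < \<epsilon>" .
  moreover have "(x, y) \<noteq> (0, 0)" using x0 by simp
  moreover have "singular_point (K 0 b 0) x y"
    by (simp add: sing_K Fy_def Fx_def G)
  ultimately show False using H by blast
qed



definition A2 :: "real \<Rightarrow> real \<Rightarrow> real \<Rightarrow> real \<Rightarrow> real \<Rightarrow> real" where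
  "A2 a b x0 x y0 = b*(x+x0)*(1+y0) + a*(x^2 + x*x0 + x0^2)"
definition B2 :: "real \<Rightarrow> real \<Rightarrow> real \<Rightarrow> real \<Rightarrow> real" where
  "B2 b x y1 y2 = ((1+y1)^2 + (1+y1)*(1+y2) + (1+y2)^2 - 1)/2 + b*x^2"
definition d0 :: "real \<Rightarrow> real \<Rightarrow> real" where
  "d0 a b = 1/(50*(\<bar>a\<bar>+\<bar>b\<bar>+1))"

lemma Fy_diff: "Fy a b x y - Fy a b x0 y0 = (y - y0) * B2 b x y0 y + (x - x0) * A2 a b x0 x y0"
  by (simp add: Fy_def Gf_def A2_def B2_def field_simps power2_eq_square power3_eq_cube)

lemma B2_diag: "B2 b x y y = Fyy b x y"
  by (simp add: B2_def Fyy_def Gf_def field_simps power2_eq_square)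
lemma A2_diag: "A2 a b x x y = Fxy a b x y"
  by (simp add: A2_def Fxy_def field_simps power2_eq_square)

lemma d0_P: "\<bar>a\<bar>+\<bar>b\<bar>+1 > (0::real)" by (simp add: add_nonneg_pos)
lemma d0_pos: "0 < d0 a b" using d0_P[of a b] by (simp add: d0_def)
lemma d0_le: "d0 a b \<le> 1/50" using d0_P[of a b] by (simp add: d0_def field_simps)
lemma d0_a: "\<bar>a\<bar> * d0 a b \<le> 1/50" using d0_P[of a b] by (simp add: d0_def field_simps)
lemma d0_b: "\<bar>b\<bar> * d0 a b \<le> 1/50" using d0_P[of a b] by (simp add: d0_def field_simps)

lemma small:
  assumes "\<bar>x\<bar> \<le> d0 a b"
  shows "\<bar>a\<bar>*\<bar>x\<bar> \<le> 1/50" "\<bar>b\<bar>*\<bar>x\<bar> \<le> 1/50" "\<bar>x\<bar> \<le> 1/50"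
proof -
  note d = d0_pos[of a b] d0_le[of a b] d0_a[where a=a and b=b] d0_b[where a=a and b=b]
  show "\<bar>a\<bar>*\<bar>x\<bar> \<le> 1/50" using mult_left_mono[OF assms, of "\<bar>a\<bar>"] d by simp
  show "\<bar>b\<bar>*\<bar>x\<bar> \<le> 1/50" using mult_left_mono[OF assms, of "\<bar>b\<bar>"] d by simp
  show "\<bar>x\<bar> \<le> 1/50" using assms d by simp
qed

lemma B2_pos:
  assumes "\<bar>x\<bar> \<le> d0 a b" "\<bar>y1\<bar> \<le> 1/10" "\<bar>y2\<bar> \<le> 1/10"
  shows "B2 b x y1 y2 \<ge> 1/2"
proof -
  note s = small[OF assms(1)]
  have w1: "9/10 \<le> 1+y1" "9/10 \<le> 1+y2" using assms by auto
  define P Q R T where "P = (1+y1)*(1+y1)" "Q = (1+y1)*(1+y2)" "R = (1+y2)*(1+y2)" "T = b*x^2"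
  have B: "B2 b x y1 y2 = (P+Q+R-1)/2 + T" unfolding B2_def P_Q_R_T_def by (simp add: power2_eq_square)
  have "(9/10)*(9/10) \<le> P" unfolding P_Q_R_T_def using w1 by (intro mult_mono) auto
  moreover have "(9/10)*(9/10) \<le> Q" unfolding P_Q_R_T_def using w1 by (intro mult_mono) auto
  moreover have "(9/10)*(9/10) \<le> R" unfolding P_Q_R_T_def using w1 by (intro mult_mono) auto
  moreover have "\<bar>T\<bar> \<le> 1/50"
  proof -
    have "\<bar>T\<bar> = (\<bar>b\<bar>*\<bar>x\<bar>)*\<bar>x\<bar>" by (simp add: P_Q_R_T_def abs_mult power2_eq_square)
    also have "\<dots> \<le> (1/50)*1" using s by (intro mult_mono) auto
    finally show ?thesis by simp
  qed
  ultimately have "81/100 \<le> P" "81/100 \<le> Q" "81/100 \<le> R" "-(1/50) \<le> T" by (simp_all add: abs_le_iff)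
  then have "143/100 \<le> P+Q+R-1" by linarith
  then have "143/200 \<le> (P+Q+R-1)/2" by simp
  then show ?thesis unfolding B using \<open>-(1/50) \<le> T\<close> by linarith
qed

lemma A2_bnd:
  assumes "\<bar>x\<bar> \<le> d0 a b" "\<bar>x0\<bar> \<le> d0 a b" "\<bar>y0\<bar> \<le> 1/10"
  shows "\<bar>A2 a b x0 x y0\<bar> \<le> 1"
proof -
  note s = small[OF assms(1)] and s0 = small[OF assms(2)]
  have w: "\<bar>1+y0\<bar> \<le> 2" using assms by auto
  have "\<bar>b*(x+x0)*(1+y0)\<bar> = (\<bar>b\<bar>*\<bar>x+x0\<bar>)*\<bar>1+y0\<bar>" by (simp add: abs_mult)
  also have "\<dots> \<le> (2/50)*2"
  proof (intro mult_mono)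
    have "\<bar>b\<bar>*\<bar>x+x0\<bar> \<le> \<bar>b\<bar>*(\<bar>x\<bar>+\<bar>x0\<bar>)" by (intro mult_left_mono) auto
    then show "\<bar>b\<bar>*\<bar>x+x0\<bar> \<le> 2/50" using s s0 by (simp add: algebra_simps)
  qed (use w in auto)
  finally have t1: "\<bar>b*(x+x0)*(1+y0)\<bar> \<le> 4/50" by simp
  have "\<bar>x^2 + x*x0 + x0^2\<bar> \<le> \<bar>x\<bar>*\<bar>x\<bar> + \<bar>x\<bar>*\<bar>x0\<bar> + \<bar>x0\<bar>*\<bar>x0\<bar>"
  proof -
    have "\<bar>x^2 + x*x0 + x0^2\<bar> \<le> \<bar>x^2 + x*x0\<bar> + \<bar>x0^2\<bar>" by (rule abs_triangle_ineq)
    moreover have "\<bar>x^2 + x*x0\<bar> \<le> \<bar>x^2\<bar> + \<bar>x*x0\<bar>" by (rule abs_triangle_ineq)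
    ultimately show ?thesis by (simp add: abs_mult power2_eq_square)
  qed
  also have "\<dots> \<le> \<bar>x\<bar>*1 + \<bar>x\<bar>*1 + \<bar>x0\<bar>*1"
    using s s0 by (intro add_mono mult_left_mono) auto
  finally have "\<bar>x^2 + x*x0 + x0^2\<bar> \<le> 2*\<bar>x\<bar> + \<bar>x0\<bar>" by simp
  then have "\<bar>a\<bar>*\<bar>x^2 + x*x0 + x0^2\<bar> \<le> \<bar>a\<bar>*(2*\<bar>x\<bar> + \<bar>x0\<bar>)" by (intro mult_left_mono) auto
  also have "\<dots> \<le> 3/50" using s s0 by (simp add: algebra_simps)
  finally have t2: "\<bar>a*(x^2 + x*x0 + x0^2)\<bar> \<le> 3/50" by (simp add: abs_mult)
  show ?thesis unfolding A2_def using t1 t2 abs_triangle_ineq[of "b*(x+x0)*(1+y0)" "a*(x^2 + x*x0 + x0^2)"] by linarith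
qed


lemma lip:
  assumes "\<bar>x\<bar> \<le> d0 a b" "\<bar>x0\<bar> \<le> d0 a b" "\<bar>y\<bar> \<le> 1/10" "\<bar>y0\<bar> \<le> 1/10"
    "Fy a b x y = 0" "Fy a b x0 y0 = 0"
  shows "\<bar>y - y0\<bar> \<le> 2 * \<bar>x - x0\<bar>"
proof -
  have eq: "(y - y0) * B2 b x y0 y = - ((x - x0) * A2 a b x0 x y0)"
    using Fy_diff[of a b x y x0 y0] assms by simp
  have B: "B2 b x y0 y \<ge> 1/2" using B2_pos assms by blast
  have A: "\<bar>A2 a b x0 x y0\<bar> \<le> 1" using A2_bnd assms by blast
  have "\<bar>y - y0\<bar> * B2 b x y0 y = \<bar>x - x0\<bar> * \<bar>A2 a b x0 x y0\<bar>"
    using arg_cong[OF eq, of abs] B by (simp add: abs_mult)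
  also have "\<dots> \<le> \<bar>x - x0\<bar> * 1" using A by (intro mult_left_mono) auto
  finally have "\<bar>y - y0\<bar> * B2 b x y0 y \<le> \<bar>x - x0\<bar>" by simp
  moreover have "\<bar>y - y0\<bar> * (1/2) \<le> \<bar>y - y0\<bar> * B2 b x y0 y" using B by (intro mult_left_mono) auto
  ultimately have "\<bar>y - y0\<bar> * (1/2) \<le> \<bar>x - x0\<bar>" by linarith
  then show ?thesis by (simp add: field_simps)
qed

lemma root_ex:
  assumes "\<bar>x\<bar> \<le> d0 a b"
  shows "\<exists>y. \<bar>y\<bar> \<le> 1/10 \<and> Fy a b x y = 0"
proof -
  note s = small[OF assms]
  have bx2: "\<bar>b*x^2\<bar> \<le> 1/50"
  proof -
    have "\<bar>b*x^2\<bar> = (\<bar>b\<bar>*\<bar>x\<bar>)*\<bar>x\<bar>" by (simp add: abs_mult power2_eq_square)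
    also have "\<dots> \<le> (1/50)*1" using s by (intro mult_mono) auto
    finally show ?thesis by simp
  qed
  have ax3: "\<bar>a*x^3\<bar> \<le> 1/50"
  proof -
    have "\<bar>a*x^3\<bar> = (\<bar>a\<bar>*\<bar>x\<bar>)*(\<bar>x\<bar>*\<bar>x\<bar>)" by (simp add: abs_mult power3_eq_cube)
    also have "\<dots> \<le> (1/50)*(1*1)" using s by (intro mult_mono) auto
    finally show ?thesis by simp
  qed
  have e1: "Fy a b x (-1/10) = -(19/200)*(9/10) + b*x^2*(9/10) + a*x^3"
    by (simp add: Fy_def Gf_def algebra_simps power2_eq_square)
  have e2: "Fy a b x (1/10) = (21/200)*(11/10) + b*x^2*(11/10) + a*x^3"
    by (simp add: Fy_def Gf_def algebra_simps power2_eq_square)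
  have "Fy a b x (-1/10) \<le> 0" unfolding e1 using bx2 ax3 unfolding abs_le_iff by linarith
  moreover have "0 \<le> Fy a b x (1/10)" unfolding e2 using bx2 ax3 unfolding abs_le_iff by linarith
  moreover have "continuous_on {-1/10..1/10} (Fy a b x)"
    unfolding Fy_def Gf_def by (intro continuous_intros) auto
  ultimately obtain y where "-1/10 \<le> y" "y \<le> 1/10" "Fy a b x y = 0"
    using IVT'[of "Fy a b x" "-1/10" 0 "1/10"] by auto
  then show ?thesis by (intro exI[of _ y]) auto
qed

lemma phi_ex:
  "\<exists>\<phi>. \<phi> 0 = 0 \<and> continuous_on {-d0 a b<..<d0 a b} \<phi> \<and>
      (\<forall>x\<in>{-d0 a b<..<d0 a b}. Fy a b x (\<phi> x) = 0)"
proof -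
  define \<phi> where "\<phi> x = (SOME y. \<bar>y\<bar> \<le> 1/10 \<and> Fy a b x y = 0)" for x
  have P: "\<bar>\<phi> x\<bar> \<le> 1/10 \<and> Fy a b x (\<phi> x) = 0" if "\<bar>x\<bar> \<le> d0 a b" for x
    unfolding \<phi>_def using someI_ex[OF root_ex[OF that]] .
  have z: "\<bar>0::real\<bar> \<le> d0 a b" using d0_pos[of a b] by simp
  have "Fy a b 0 0 = 0" by (simp add: Fy_def Gf_def)
  then have "\<bar>\<phi> 0 - 0\<bar> \<le> 2 * \<bar>0 - 0\<bar>" using lip[OF z z, of "\<phi> 0" 0] P[OF z] by simp
  then have "\<phi> 0 = 0" by simp
  moreover have "continuous_on {-d0 a b<..<d0 a b} \<phi>"
  proof (rule lipschitz_on_continuous_on[of 2], rule lipschitz_onI)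
    fix x y assume "x \<in> {-d0 a b<..<d0 a b}" "y \<in> {-d0 a b<..<d0 a b}"
    then have h: "\<bar>x\<bar> \<le> d0 a b" "\<bar>y\<bar> \<le> d0 a b" by auto
    show "dist (\<phi> x) (\<phi> y) \<le> 2 * dist x y"
      using lip[OF h, of "\<phi> x" "\<phi> y"] P[OF h(1)] P[OF h(2)] by (simp add: dist_real_def)
  qed simp
  moreover have "\<forall>x\<in>{-d0 a b<..<d0 a b}. Fy a b x (\<phi> x) = 0" using P by auto
  ultimately show ?thesis by blast
qed


lemma implicit_deriv:
  assumes d: "d \<le> d0 a b" and box: "\<And>x. x \<in> {-d<..<d} \<Longrightarrow> \<bar>\<phi> x\<bar> \<le> 1/10 \<and> Fy a b x (\<phi> x) = 0"
    and c: "continuous_on {-d<..<d} \<phi>" and x0: "x0 \<in> {-d<..<d}"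
  shows "(\<phi> has_real_derivative (- Fxy a b x0 (\<phi> x0) / Fyy b x0 (\<phi> x0))) (at x0)"
proof -
  have op: "open {-d<..<d}" by simp
  have cx: "isCont \<phi> x0" using continuous_on_eq_continuous_at[OF op] c x0 by blast
  have hx0: "\<bar>x0\<bar> \<le> d0 a b" using x0 d by auto
  have B0: "B2 b x0 (\<phi> x0) (\<phi> x0) \<ge> 1/2" using B2_pos[OF hx0] box[OF x0] by blast
  define q where "q y = - A2 a b x0 y (\<phi> x0) / B2 b y (\<phi> x0) (\<phi> y)" for y
  have cB: "isCont (\<lambda>y. B2 b y (\<phi> x0) (\<phi> y)) x0" unfolding B2_def by (intro continuous_intros cx) auto
  have "isCont q x0" unfolding q_def A2_def
  proof (intro continuous_intros cB)
    show "B2 b x0 (\<phi> x0) (\<phi> x0) \<noteq> 0" using B0 by linarith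
  qed
  then have "(q \<longlongrightarrow> q x0) (at x0)" by (simp add: isCont_def)
  moreover have qx0: "q x0 = - Fxy a b x0 (\<phi> x0) / Fyy b x0 (\<phi> x0)"
    by (simp add: q_def A2_diag B2_diag)
  moreover have "eventually (\<lambda>y. q y = (\<phi> y - \<phi> x0) / (y - x0)) (at x0)"
  proof -
    have "eventually (\<lambda>y. y \<in> {-d<..<d} - {x0}) (at x0)" by (rule eventually_at_in_open) (use x0 in auto)
    then show ?thesis
    proof (rule eventually_mono)
      fix y assume y: "y \<in> {-d<..<d} - {x0}"
      have hy: "\<bar>y\<bar> \<le> d0 a b" using y d by auto
      have By: "B2 b y (\<phi> x0) (\<phi> y) \<ge> 1/2" using B2_pos[OF hy] box[OF x0] box[of y] y by blast
      have "(\<phi> y - \<phi> x0) * B2 b y (\<phi> x0) (\<phi> y) = - ((y - x0) * A2 a b x0 y (\<phi> x0))"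
        using Fy_diff[of a b y "\<phi> y" x0 "\<phi> x0"] box[OF x0] box[of y] y by simp
      moreover have "y - x0 \<noteq> 0" using y by auto
      ultimately show "q y = (\<phi> y - \<phi> x0) / (y - x0)"
        using By unfolding q_def by (simp add: field_simps)
    qed
  qed
  ultimately have "((\<lambda>y. (\<phi> y - \<phi> x0) / (y - x0)) \<longlongrightarrow> - Fxy a b x0 (\<phi> x0) / Fyy b x0 (\<phi> x0)) (at x0)"
    using Lim_transform_eventually[of q "q x0" "at x0"] by simp
  then show ?thesis unfolding has_field_derivative_iff .
qed



lemma deriv_n_cong:
  fixes f g :: "real \<Rightarrow> real"
  assumes S: "open S" and eq: "\<And>x. x \<in> S \<Longrightarrow> f x = g x"
  shows "x \<in> S \<Longrightarrow> (deriv^^n) f x = (deriv^^n) g x"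
proof (induction n arbitrary: x)
  case 0
  then show ?case using eq by simp
next
  case (Suc n)
  have "eventually (\<lambda>y. y \<in> S) (nhds x)" by (rule eventually_nhds_in_open[OF S Suc.prems])
  then have "eventually (\<lambda>y. (deriv^^n) f y = (deriv^^n) g y) (nhds x)"
    by (rule eventually_mono) (rule Suc.IH)
  then show ?case by (simp add: deriv_cong_ev)
qed

lemma chain_K:
  assumes "(\<phi> has_real_derivative D) (at x)"
  shows "((\<lambda>t. K a b e t (\<phi> t)) has_real_derivative Fx a b e x (\<phi> x) + Fy a b x (\<phi> x) * D) (at x)"
  unfolding K_def Fx_def Fy_def Gf_def
  by (rule derivative_eq_intros assms refl | simp)+ (simp add: field_simps power2_eq_square power3_eq_cube)

lemma chain_Fx:
  assumes "(\<phi> has_real_derivative D) (at x)"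
  shows "((\<lambda>t. Fx a b e t (\<phi> t)) has_real_derivative Fxx a b e x (\<phi> x) + Fxy a b x (\<phi> x) * D) (at x)"
  unfolding Fxx_def Fx_def Fxy_def Gf_def
  by (rule derivative_eq_intros assms refl | simp)+ (simp add: field_simps power2_eq_square power3_eq_cube)

lemma g2_deriv:
  assumes "(\<phi> has_real_derivative 0) (at 0)" "\<phi> 0 = 0"
  shows "((\<lambda>t. Fxx a b e t (\<phi> t) + Fxy a b t (\<phi> t) * (- Fxy a b t (\<phi> t) / Fyy b t (\<phi> t)))
           has_real_derivative 6*a) (at 0)"
  unfolding Fxx_def Fxy_def Fyy_def Gf_def
  by (rule derivative_eq_intros assms refl | simp add: assms)+

lemma poly4: "(deriv^^4) (\<lambda>x::real. e*x^4) 0 = 24*e"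
proof -
  have 1: "deriv (\<lambda>x::real. e*x^4) = (\<lambda>x. 4*e*x^3)"
    by (intro ext DERIV_imp_deriv) (auto intro!: derivative_eq_intros)
  have 2: "deriv (\<lambda>x::real. 4*e*x^3) = (\<lambda>x. 12*e*x^2)"
    by (intro ext DERIV_imp_deriv) (auto intro!: derivative_eq_intros)
  have 3: "deriv (\<lambda>x::real. 12*e*x^2) = (\<lambda>x. 24*e*x)"
    by (intro ext DERIV_imp_deriv) (auto intro!: derivative_eq_intros)
  have 4: "deriv (\<lambda>x::real. 24*e*x) = (\<lambda>x. 24*e)"
    by (intro ext DERIV_imp_deriv) (auto intro!: derivative_eq_intros)
  have P: "(deriv^^4) g = deriv (deriv (deriv (deriv g)))" for g :: "real \<Rightarrow> real"
    by (simp add: eval_nat_numeral)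
  show ?thesis unfolding P 1 2 3 4 by simp
qed



lemma derivs:
  fixes \<phi> :: "real \<Rightarrow> real"
  assumes \<delta>: "\<delta> > 0" and p0: "\<phi> 0 = 0" and c: "continuous_on {-\<delta><..<\<delta>} \<phi>"
    and F: "\<forall>x\<in>{-\<delta><..<\<delta>}. Fy a b x (\<phi> x) = 0"
  shows "(deriv^^0) (\<lambda>x. K a b e x (\<phi> x)) 0 = 0 \<and>
         (deriv^^1) (\<lambda>x. K a b e x (\<phi> x)) 0 = 0 \<and>
         (deriv^^2) (\<lambda>x. K a b e x (\<phi> x)) 0 = 0 \<and>
         (deriv^^3) (\<lambda>x. K a b e x (\<phi> x)) 0 = 6*a \<and>
         (a = 0 \<longrightarrow> (deriv^^4) (\<lambda>x. K a b e x (\<phi> x)) 0 = 24*e)"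
proof -
  define f where "f = (\<lambda>x. K a b e x (\<phi> x))"
  have opd: "open {-\<delta><..<\<delta>}" by simp
  have z\<delta>: "(0::real) \<in> {-\<delta><..<\<delta>}" using \<delta> by simp
  have "isCont \<phi> 0" using continuous_on_eq_continuous_at[OF opd] c z\<delta> by blast
  then have "\<phi> \<midarrow>0\<rightarrow> \<phi> 0" by (simp add: isCont_def)
  then obtain d1 where d1: "d1 > 0" "\<And>x. x \<noteq> 0 \<and> norm (x - 0) < d1 \<Longrightarrow> norm (\<phi> x - \<phi> 0) < 1/10"
    unfolding LIM_eq by (metis divide_pos_pos zero_less_numeral zero_less_one)
  have sm: "\<bar>\<phi> x\<bar> \<le> 1/10" if "\<bar>x\<bar> < d1" for x
    using d1(2)[of x] that p0 by (cases "x = 0") auto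
  define d where "d = min \<delta> (min d1 (d0 a b))"
  define S where "S = {-d<..<d}"
  have dpos: "d > 0" using \<delta> d1 d0_pos[of a b] by (simp add: d_def)
  have dd0: "d \<le> d0 a b" by (simp add: d_def)
  have 0: "0 \<in> S" using dpos by (simp add: S_def)
  have opS: "open S" by (simp add: S_def)
  have box: "\<bar>\<phi> x\<bar> \<le> 1/10 \<and> Fy a b x (\<phi> x) = 0" if "x \<in> {-d<..<d}" for x
    using that sm[of x] F by (auto simp: d_def)
  have cS: "continuous_on {-d<..<d} \<phi>" by (rule continuous_on_subset[OF c]) (auto simp: d_def)
  define R where "R x = - Fxy a b x (\<phi> x) / Fyy b x (\<phi> x)" for x
  have D: "(\<phi> has_real_derivative R x) (at x)" if "x \<in> S" for x
    unfolding R_def by (rule implicit_deriv[OF dd0 box cS]) (use that in \<open>auto simp: S_def\<close>)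
  have df: "deriv f x = Fx a b e x (\<phi> x)" if "x \<in> S" for x
  proof -
    have "(f has_real_derivative Fx a b e x (\<phi> x) + Fy a b x (\<phi> x) * R x) (at x)"
      unfolding f_def by (rule chain_K[OF D[OF that]])
    moreover have "Fy a b x (\<phi> x) = 0" using box that by (auto simp: S_def)
    ultimately show ?thesis by (simp add: DERIV_imp_deriv)
  qed
  define g2 where "g2 t = Fxx a b e t (\<phi> t) + Fxy a b t (\<phi> t) * (- Fxy a b t (\<phi> t) / Fyy b t (\<phi> t))" for t
  have ddf: "deriv (deriv f) x = g2 x" if "x \<in> S" for x
  proof -
    have "eventually (\<lambda>y. y \<in> S) (nhds x)" by (rule eventually_nhds_in_open[OF opS that])
    then have "eventually (\<lambda>y. deriv f y = Fx a b e y (\<phi> y)) (nhds x)"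
      by (rule eventually_mono) (rule df)
    then have "deriv (deriv f) x = deriv (\<lambda>y. Fx a b e y (\<phi> y)) x" by (simp add: deriv_cong_ev)
    also have "\<dots> = g2 x" unfolding g2_def R_def[symmetric]
      by (rule DERIV_imp_deriv, rule chain_Fx[OF D[OF that]])
    finally show ?thesis .
  qed
  have D0: "(\<phi> has_real_derivative 0) (at 0)"
    using D[OF 0] by (simp add: R_def p0 Fxy_def)
  have dddf: "deriv (deriv (deriv f)) 0 = 6*a"
  proof -
    have "eventually (\<lambda>y. y \<in> S) (nhds 0)" by (rule eventually_nhds_in_open[OF opS 0])
    then have "eventually (\<lambda>y. deriv (deriv f) y = g2 y) (nhds 0)"
      by (rule eventually_mono) (rule ddf)
    then have "deriv (deriv (deriv f)) 0 = deriv g2 0" by (simp add: deriv_cong_ev)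
    also have "\<dots> = 6*a" unfolding g2_def
      by (rule DERIV_imp_deriv, rule g2_deriv[OF D0 p0])
    finally show ?thesis .
  qed
  have r0: "(deriv^^0) f 0 = 0" by (simp add: f_def p0 K_def Gf_def)
  have r1: "(deriv^^1) f 0 = 0" using df[OF 0] by (simp add: p0 Fx_def Gf_def)
  have r2: "(deriv^^2) f 0 = 0" using ddf[OF 0] by (simp add: eval_nat_numeral g2_def p0 Fxx_def Fxy_def Gf_def)
  have r3: "(deriv^^3) f 0 = 6*a" using dddf by (simp add: eval_nat_numeral)
  have r4: "(deriv^^4) f 0 = 24*e" if a0: "a = 0"
  proof -
    have "f x = e*x^4" if "x \<in> S" for x
    proof -
      have b: "\<bar>\<phi> x\<bar> \<le> 1/10" "Fy a b x (\<phi> x) = 0" using box that by (auto simp: S_def)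
      then have "Gf b x (\<phi> x) * (1 + \<phi> x) = 0" using a0 by (simp add: Fy_def)
      moreover have "1 + \<phi> x \<noteq> 0" using b(1) by auto
      ultimately have "Gf b x (\<phi> x) = 0" by simp
      then show ?thesis by (simp add: f_def K_def a0)
    qed
    then have "(deriv^^4) f 0 = (deriv^^4) (\<lambda>x. e*x^4) 0" by (intro deriv_n_cong[OF opS _ 0])
    then show ?thesis using poly4 by simp
  qed
  show ?thesis using r0 r1 r2 r3 r4 unfolding f_def by blast
qed



lemma fact3: "fact 3 = (6::real)" by (simp add: eval_nat_numeral)
lemma fact4: "fact 4 = (24::real)" by (simp add: eval_nat_numeral)

lemma lead_K: "H0star_leading (K a b e) k c \<longleftrightarrow>
     (\<exists>\<delta>>0. \<exists>\<phi>. \<phi> 0 = 0 \<and> continuous_on {-\<delta><..<\<delta>} \<phi> \<and>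
        (\<forall>x\<in>{-\<delta><..<\<delta>}. Fy a b x (\<phi> x) = 0) \<and>
        (\<forall>j<k. (deriv ^^ j) (\<lambda>x. K a b e x (\<phi> x)) 0 = 0) \<and>
        (deriv ^^ k) (\<lambda>x. K a b e x (\<phi> x)) 0 / fact k = c) \<and> c \<noteq> 0"
  unfolding H0star_leading_def pdy_K ..

lemma less3: "j < (3::nat) \<longleftrightarrow> j = 0 \<or> j = 1 \<or> j = 2" by auto
lemma less4: "j < (4::nat) \<longleftrightarrow> j = 0 \<or> j = 1 \<or> j = 2 \<or> j = 3" by auto

lemma cusp_K: "cusp_of_order (K a b e) 1 \<longleftrightarrow> a \<noteq> 0"
proof
  assume "cusp_of_order (K a b e) 1"
  then obtain c \<delta> \<phi> where c: "c \<noteq> 0" and \<delta>: "\<delta> > 0" "\<phi> 0 = 0" "continuous_on {-\<delta><..<\<delta>} \<phi>"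
    "\<forall>x\<in>{-\<delta><..<\<delta>}. Fy a b x (\<phi> x) = 0"
    and v: "(deriv ^^ 3) (\<lambda>x. K a b e x (\<phi> x)) 0 / fact 3 = c"
    unfolding cusp_of_order_def lead_K by (auto simp: numeral_3_eq_3)
  have "(deriv ^^ 3) (\<lambda>x. K a b e x (\<phi> x)) 0 = 6*a" using derivs[OF \<delta>] by blast
  then show "a \<noteq> 0" using v c by (simp add: fact3)
next
  assume a: "a \<noteq> 0"
  obtain \<phi> where \<phi>: "\<phi> 0 = 0" "continuous_on {-d0 a b<..<d0 a b} \<phi>"
      "\<forall>x\<in>{-d0 a b<..<d0 a b}. Fy a b x (\<phi> x) = 0" using phi_ex by blast
  note r = derivs[OF d0_pos \<phi>, of e]
  have j: "\<forall>j<3. (deriv ^^ j) (\<lambda>x. K a b e x (\<phi> x)) 0 = 0" using r by (auto simp: less3)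
  have v: "(deriv ^^ 3) (\<lambda>x. K a b e x (\<phi> x)) 0 / fact 3 = a" using r by (simp add: fact3)
  have "H0star_leading (K a b e) 3 a" unfolding lead_K
    using j v a d0_pos[of a b] \<phi> by blast
  then show "cusp_of_order (K a b e) 1" unfolding cusp_of_order_def
    by (auto simp: numeral_3_eq_3)
qed

lemma lead4_K: "(\<exists>c. P c \<and> H0star_leading (K a b e) 4 c) \<longleftrightarrow> a = 0 \<and> P e \<and> e \<noteq> 0"
proof
  assume "\<exists>c. P c \<and> H0star_leading (K a b e) 4 c"
  then obtain c \<delta> \<phi> where c: "P c" "c \<noteq> 0" and \<delta>: "\<delta> > 0" "\<phi> 0 = 0" "continuous_on {-\<delta><..<\<delta>} \<phi>"
    "\<forall>x\<in>{-\<delta><..<\<delta>}. Fy a b x (\<phi> x) = 0"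
    and j: "\<forall>j<4. (deriv ^^ j) (\<lambda>x. K a b e x (\<phi> x)) 0 = 0"
    and v: "(deriv ^^ 4) (\<lambda>x. K a b e x (\<phi> x)) 0 / fact 4 = c"
    unfolding lead_K by blast
  note r = derivs[OF \<delta>, of e]
  have "(deriv ^^ 3) (\<lambda>x. K a b e x (\<phi> x)) 0 = 0" using j by simp
  then have a0: "a = 0" using r by simp
  then have "c = e" using r v by (simp add: fact4)
  then show "a = 0 \<and> P e \<and> e \<noteq> 0" using a0 c by simp
next
  assume h: "a = 0 \<and> P e \<and> e \<noteq> 0"
  obtain \<phi> where \<phi>: "\<phi> 0 = 0" "continuous_on {-d0 a b<..<d0 a b} \<phi>"
      "\<forall>x\<in>{-d0 a b<..<d0 a b}. Fy a b x (\<phi> x) = 0" using phi_ex by blast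
  note r = derivs[OF d0_pos \<phi>, of e]
  have j: "\<forall>j<4. (deriv ^^ j) (\<lambda>x. K a b e x (\<phi> x)) 0 = 0" using r h by (auto simp: less4)
  have v: "(deriv ^^ 4) (\<lambda>x. K a b e x (\<phi> x)) 0 / fact 4 = e" using r h by (simp add: fact4)
  have "H0star_leading (K a b e) 4 e" unfolding lead_K
    using j v h d0_pos[of a b] \<phi> by blast
  then show "\<exists>c. P c \<and> H0star_leading (K a b e) 4 c" using h by blast
qed

lemma saddle_K: "nilpotent_saddle_of_order (K a b e) 1 \<longleftrightarrow> a = 0 \<and> e < 0"
  using lead4_K[of "\<lambda>c. c < 0" a b e] unfolding nilpotent_saddle_of_order_def
  by (auto simp: eval_nat_numeral)

lemma center_K: "nilpotent_center_of_order (K a b e) 1 \<longleftrightarrow> a = 0 \<and> e > 0"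
  using lead4_K[of "\<lambda>c. c > 0" a b e] unfolding nilpotent_center_of_order_def
  by (auto simp: eval_nat_numeral)

lemma isonil_K: "isolated_nilpotent_singular_point (K a b e) 0 0 \<longleftrightarrow> a \<noteq> 0 \<or> e \<noteq> 0"
  unfolding isolated_nilpotent_singular_point_def using nilp_K iso_if not_iso by blast

theorem theorem5:
  fixes h11 h20 h31 h40 :: real
  defines "H \<equiv> Hbar2 h11 h20 h31 h40"
  shows "(isolated_nilpotent_singular_point H 0 0 \<longleftrightarrow>
            (h31 \<noteq> -2*h11*h20 \<or>
             (h31 = -2*h11*h20 \<and> h20^2 + h40 > 0) \<or>
             (h31 = -2*h11*h20 \<and> h20^2 + h40 < 0)))
       \<and> (cusp_of_order H 1 \<longleftrightarrow> h31 \<noteq> -2*h11*h20)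
       \<and> (nilpotent_saddle_of_order H 1 \<longleftrightarrow> h31 = -2*h11*h20 \<and> h20^2 + h40 > 0)
       \<and> (nilpotent_center_of_order H 1 \<longleftrightarrow> h31 = -2*h11*h20 \<and> h20^2 + h40 < 0)"
proof -
  define a where "a = 8*h11*h20+4*h31"
  define b where "b = 4*h20-2*h11^2"
  define e where "e = 2*h11*(8*h11*h20+4*h31) - 8*(h20^2+h40)"
  have HK: "H = K a b e" unfolding H_def a_def b_def e_def by (rule Hbar2_K)
  have A: "h31 = -2*h11*h20 \<longleftrightarrow> a = 0" unfolding a_def by auto
  have E: "a = 0 \<Longrightarrow> e = - 8*(h20^2+h40)" unfolding e_def a_def by simp
  show ?thesis unfolding HK isonil_K cusp_K saddle_K center_K A
    using E by auto
qed


end
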